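(* Let $X$ be a complex manifold and let $X=\bigcup_{j\ge1}K_j$ where $(K_j)$ is a sequence of compact sets with $K_j\subset\mathring K_{j+1}$ for all $j$. Let $B\subset X$ be compact and assume there is $j_0\in\mathbb{N}$ with $B\subset K_{j_0}$ and $\widehat B_{\mathcal{O}(K_j)}=\widehat B_{\mathcal{O}(K_{j_0})}$ for all $j\ge j_0$. Then for any other sequence of compact sets $(L_l)_{l\ge1}$ with $L_l\subset\mathring L_{l+1}$ for all $l$ and $\bigcup_l L_l=X$, there exists $l_1\in\mathbb{N}$ such that $B\subset L_{l_1}$ and $\widehat B_{\mathcal{O}(L_l)}=\widehat B_{\mathcal{O}(L_{l_1})}$ for all $l\ge l_1$.
   Context: For compact sets $K\subset L$ in a complex manifold, $\mathcal{O}(L)$ denotes the algebra of functions holomorphic on some open neighborhood of $L$, and $\widehat K_{\mathcal{O}(L)}=\{x\in L: |f(x)|\le\sup_K|f| \text{ for all } f\in\mathcal{O}(L)\}$. *)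

theory Defs
  imports "HOL-Analysis.Analysis"
begin

definition holo_cn :: "(complex^'n::finite) set \<Rightarrow> (complex^'n \<Rightarrow> complex) \<Rightarrow> bool" where
  "holo_cn S g \<longleftrightarrow> (\<forall>z\<in>S. \<exists>D. (g has_derivative D) (at z) \<and> (\<forall>c v. D (c *s v) = c * D v))"

definition complex_atlas :: "('a::topological_space set \<times> ('a \<Rightarrow> complex^'n::finite)) set \<Rightarrow> bool" where
  "complex_atlas A \<longleftrightarrow>
     (\<forall>(U,\<phi>)\<in>A. open U \<and> open (\<phi> ` U) \<and> (\<exists>\<psi>. homeomorphism U (\<phi> ` U) \<phi> \<psi>)) \<and>
     (\<Union>(fst ` A) = UNIV) \<and>
     (\<forall>(U,\<phi>)\<in>A. \<forall>(V,\<psi>)\<in>A. \<forall>k.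
        holo_cn (\<phi> ` (U \<inter> V)) (\<lambda>z. (\<psi> (inv_into U \<phi> z)) $ k))"

definition holo_on_mfd :: "('a::topological_space set \<times> ('a \<Rightarrow> complex^'n::finite)) set \<Rightarrow> 'a set \<Rightarrow> ('a \<Rightarrow> complex) \<Rightarrow> bool" where
  "holo_on_mfd A W f \<longleftrightarrow> open W \<and>
     (\<forall>(U,\<phi>)\<in>A. holo_cn (\<phi> ` (U \<inter> W)) (\<lambda>z. f (inv_into U \<phi> z)))"

definition hol_germs :: "('a::topological_space set \<times> ('a \<Rightarrow> complex^'n::finite)) set \<Rightarrow> 'a set \<Rightarrow> ('a \<Rightarrow> complex) set" where
  "hol_germs A L = {f. \<exists>W. L \<subseteq> W \<and> holo_on_mfd A W f}"

text \<open>The O(L)-hull of K (sup taken in the extended reals, so sup over the empty set is -infinity).\<close>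
definition hol_hull :: "('a::topological_space set \<times> ('a \<Rightarrow> complex^'n::finite)) set \<Rightarrow> 'a set \<Rightarrow> 'a set \<Rightarrow> 'a set" where
  "hol_hull A L K = {x\<in>L. \<forall>f\<in>hol_germs A L.
      ereal (norm (f x)) \<le> (SUP y\<in>K. ereal (norm (f y)))}"

end

theory Submission
  imports Defs
begin

lemma hull_mono:
  assumes "L \<subseteq> L'"
  shows "hol_hull A L B \<subseteq> hol_hull A L' B"
proof -
  have g: "hol_germs A L' \<subseteq> hol_germs A L"
    using assms unfolding hol_germs_def by (auto intro: order_trans)
  show ?thesis
  proof
    fix x assume "x \<in> hol_hull A L B"
    then have x: "x \<in> L" "\<forall>f\<in>hol_germs A L. ereal (norm (f x)) \<le> (SUP y\<in>B. ereal (norm (f y)))"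
      unfolding hol_hull_def by auto
    show "x \<in> hol_hull A L' B" unfolding hol_hull_def
      using x g assms by (simp add: subset_iff)
  qed
qed

lemma exh_mono:
  fixes L :: "nat \<Rightarrow> 'a::topological_space set"
  assumes "\<And>l. L l \<subseteq> interior (L (Suc l))"
  shows "i \<le> j \<Longrightarrow> L i \<subseteq> L j"
proof (induction j)
  case 0 then show ?case by simp
next
  case (Suc j)
  have "L j \<subseteq> L (Suc j)" using assms[of j] interior_subset by (rule order_trans)
  show ?case
  proof (cases "i = Suc j")
    case False
    then have "i \<le> j" using Suc.prems by simp
    then show ?thesis using Suc.IH \<open>L j \<subseteq> L (Suc j)\<close> by blast
  qed simp
qed

lemma exh_cover:
  fixes L :: "nat \<Rightarrow> 'a::topological_space set"
  assumes "\<And>l. L l \<subseteq> interior (L (Suc l))" and "(\<Union>l. L l) = UNIV"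
    and "compact C"
  shows "\<exists>l. C \<subseteq> L l"
proof -
  have cov: "C \<subseteq> (\<Union>l. interior (L l))"
  proof
    fix x assume "x \<in> C"
    from assms(2) obtain l where "x \<in> L l" by blast
    then have "x \<in> interior (L (Suc l))" using assms(1) by blast
    then show "x \<in> (\<Union>l. interior (L l))" by blast
  qed
  have "\<exists>I. finite I \<and> C \<subseteq> (\<Union>l\<in>I. interior (L l))"
    by (rule compactE_image[OF assms(3), of UNIV "\<lambda>l. interior (L l)"]) (use cov in auto)
  then obtain I where I: "finite I" "C \<subseteq> (\<Union>l\<in>I. interior (L l))" by blast
  define m where "m = Max (insert 0 I)"
  have sub: "interior (L i) \<subseteq> L m" if "i \<in> I" for i
  proof -
    have "i \<le> m" unfolding m_def using I(1) that by simp
    then have "L i \<subseteq> L m" by (rule exh_mono[of L, OF assms(1)])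
    then show ?thesis using interior_subset by (rule order_trans[rotated])
  qed
  have "C \<subseteq> L m" using I(2) sub by blast
  then show ?thesis by blast
qed

theorem lemma4p1:
  fixes A :: "('a::t2_space set \<times> ('a \<Rightarrow> complex^'n::finite)) set"
    and K L :: "nat \<Rightarrow> 'a set" and B :: "'a set" and j0 :: nat
  assumes "complex_atlas A"
    and "\<And>j. compact (K j)" and "\<And>j. K j \<subseteq> interior (K (Suc j))" and "(\<Union>j. K j) = UNIV"
    and "compact B" and "B \<subseteq> K j0"
    and "\<And>j. j \<ge> j0 \<Longrightarrow> hol_hull A (K j) B = hol_hull A (K j0) B"
    and "\<And>l. compact (L l)" and "\<And>l. L l \<subseteq> interior (L (Suc l))" and "(\<Union>l. L l) = UNIV"
  shows "\<exists>l1. B \<subseteq> L l1 \<and> (\<forall>l\<ge>l1. hol_hull A (L l) B = hol_hull A (L l1) B)"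
proof -
  obtain l1 where l1: "K j0 \<subseteq> L l1" using exh_cover[OF assms(9,10,2)] by blast
  have "hol_hull A (L l) B = hol_hull A (L l1) B" if "l \<ge> l1" for l
  proof -
    obtain j where j: "L l \<subseteq> K j" using exh_cover[OF assms(3,4,8)] by blast
    have "K j \<subseteq> K (max j j0)" by (rule exh_mono[of K, OF assms(3)]) simp
    then have "L l \<subseteq> K (max j j0)" using j by (rule order_trans[rotated])
    then have "hol_hull A (L l) B \<subseteq> hol_hull A (K (max j j0)) B" by (rule hull_mono)
    also have "\<dots> = hol_hull A (K j0) B" by (rule assms(7)) simp
    also have "\<dots> \<subseteq> hol_hull A (L l1) B" using l1 by (rule hull_mono)
    finally have a: "hol_hull A (L l) B \<subseteq> hol_hull A (L l1) B" .
    have "L l1 \<subseteq> L l" using that by (rule exh_mono[of L, OF assms(9)])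
    then have c: "hol_hull A (L l1) B \<subseteq> hol_hull A (L l) B" by (rule hull_mono)
    show ?thesis using a c by (rule equalityI)
  qed
  moreover have "B \<subseteq> L l1" using assms(6) l1 by (rule order_trans)
  ultimately show ?thesis by blast
qed

end
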